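(* Let $G$ be a $(P_5,\text{chair})$-free graph and let $C=v_1v_2v_3v_4v_5v_1$ be an induced $C_5$ in $G$. Let $1\le i\le 5$, let $u,v\in S_4(i)$ with $uv\notin E(G)$, and let $s\in S^1_3(i)\cup S_4(i+2)\cup S_4(i-2)$. Then $s$ is either adjacent to both $u$ and $v$ or to neither.
   Context: All graphs are finite and simple; $P_5$ is the path on 5 vertices; the chair is a $P_4$ plus a vertex adjacent to exactly one of the two middle vertices of the $P_4$; "$H$-free" means no induced subgraph isomorphic to $H$. Indices modulo 5; for $v\notin V(C)$ let $N_C(v)=N(v)\cap V(C)$. $S^1_3(j)=\{v\notin V(C): N_C(v)=\{v_{j-1},v_j,v_{j+1}\}\}$, $S_4(j)=\{v\notin V(C): N_C(v)=\{v_{j-2},v_{j-1},v_{j+1},v_{j+2}\}\}$. *)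

theory Defs
  imports Main
begin

definition simple_graph :: "'a set \<Rightarrow> ('a \<Rightarrow> 'a \<Rightarrow> bool) \<Rightarrow> bool" where
  "simple_graph V E \<longleftrightarrow> finite V \<and> (\<forall>x y. E x y \<longrightarrow> x \<in> V \<and> y \<in> V)
     \<and> (\<forall>x y. E x y \<longrightarrow> E y x) \<and> (\<forall>x. \<not> E x x)"

definition has_induced :: "'a set \<Rightarrow> ('a \<Rightarrow> 'a \<Rightarrow> bool) \<Rightarrow> 'b set \<Rightarrow> ('b \<Rightarrow> 'b \<Rightarrow> bool) \<Rightarrow> bool" where
  "has_induced V E VH EH \<longleftrightarrow> (\<exists>f. inj_on f VH \<and> f ` VH \<subseteq> V \<and>
      (\<forall>x\<in>VH. \<forall>y\<in>VH. E (f x) (f y) \<longleftrightarrow> EH x y))"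

definition P5_adj :: "nat \<Rightarrow> nat \<Rightarrow> bool" where
  "P5_adj x y \<longleftrightarrow> x + 1 = y \<or> y + 1 = x"

definition chair_adj :: "nat \<Rightarrow> nat \<Rightarrow> bool" where
  "chair_adj x y \<longleftrightarrow> (x < 4 \<and> y < 4 \<and> (x + 1 = y \<or> y + 1 = x))
     \<or> {x, y} = {1, 4}"

definition P5_chair_free :: "'a set \<Rightarrow> ('a \<Rightarrow> 'a \<Rightarrow> bool) \<Rightarrow> bool" where
  "P5_chair_free V E \<longleftrightarrow> \<not> has_induced V E {0..<5::nat} P5_adj
     \<and> \<not> has_induced V E {0..<5::nat} chair_adj"

definition induced_C5 :: "'a set \<Rightarrow> ('a \<Rightarrow> 'a \<Rightarrow> bool) \<Rightarrow> (nat \<Rightarrow> 'a) \<Rightarrow> bool" where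
  "induced_C5 V E v \<longleftrightarrow> inj_on v {0..<5} \<and> v ` {0..<5} \<subseteq> V \<and>
     (\<forall>i<5. \<forall>j<5. E (v i) (v j) \<longleftrightarrow> (j = (i + 1) mod 5 \<or> i = (j + 1) mod 5))"

definition cv :: "(nat \<Rightarrow> 'a) \<Rightarrow> int \<Rightarrow> 'a" where
  "cv v i = v (nat (i mod 5))"

definition NC :: "('a \<Rightarrow> 'a \<Rightarrow> bool) \<Rightarrow> (nat \<Rightarrow> 'a) \<Rightarrow> 'a \<Rightarrow> 'a set" where
  "NC E v x = {y \<in> v ` {0..<5}. E x y}"

definition S13 :: "'a set \<Rightarrow> ('a \<Rightarrow> 'a \<Rightarrow> bool) \<Rightarrow> (nat \<Rightarrow> 'a) \<Rightarrow> int \<Rightarrow> 'a set" where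
  "S13 V E v j = {x \<in> V. x \<notin> v ` {0..<5} \<and>
      NC E v x = {cv v (j - 1), cv v j, cv v (j + 1)}}"

definition S4 :: "'a set \<Rightarrow> ('a \<Rightarrow> 'a \<Rightarrow> bool) \<Rightarrow> (nat \<Rightarrow> 'a) \<Rightarrow> int \<Rightarrow> 'a set" where
  "S4 V E v j = {x \<in> V. x \<notin> v ` {0..<5} \<and>
      NC E v x = {cv v (j - 2), cv v (j - 1), cv v (j + 1), cv v (j + 2)}}"

end

theory Submission
  imports Defs
begin

lemma P5_lemma:
  assumes "simple_graph V E" "a \<in> V" "b \<in> V" "c \<in> V" "d \<in> V" "e \<in> V"
    "E a b" "E b c" "E c d" "E d e" "\<not> E a c" "\<not> E a d" "\<not> E a e"
    "\<not> E b d" "\<not> E b e" "\<not> E c e"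
  shows "has_induced V E {0..<5::nat} P5_adj"
proof -
  have irr: "\<And>x. \<not> E x x" and sym: "\<And>x y. E x y \<Longrightarrow> E y x"
    using assms(1) unfolding simple_graph_def by auto
  have d: "a \<noteq> b" "a \<noteq> c" "a \<noteq> d" "a \<noteq> e" "b \<noteq> c" "b \<noteq> d" "b \<noteq> e"
      "c \<noteq> d" "c \<noteq> e" "d \<noteq> e"
    using assms irr sym by metis+
  define f where "f = (\<lambda>n::nat. [a,b,c,d,e] ! n)"
  have U: "{0..<5::nat} = {0,1,2,3,4}" by auto
  have "inj_on f {0..<5}" unfolding U f_def using d by (auto simp: inj_on_def)
  moreover have "f ` {0..<5} \<subseteq> V" unfolding U f_def using assms by auto
  moreover have "\<forall>x\<in>{0..<5}. \<forall>y\<in>{0..<5}. E (f x) (f y) \<longleftrightarrow> P5_adj x y"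
    unfolding U f_def P5_adj_def using assms irr sym by auto
  ultimately show ?thesis unfolding has_induced_def by blast
qed

lemma core:
  assumes "simple_graph V E" "\<not> has_induced V E {0..<5::nat} P5_adj"
    "a \<in> V" "c \<in> V" "u \<in> V" "w \<in> V" "s \<in> V"
    "E u c" "E w c" "\<not> E u a" "\<not> E w a" "\<not> E c a" "E s a" "\<not> E s c" "\<not> E u w"
  shows "(E s u \<and> E s w) \<or> (\<not> E s u \<and> \<not> E s w)"
proof -
  have sym: "\<And>x y. E x y \<Longrightarrow> E y x"
    using assms(1) unfolding simple_graph_def by auto
  have "\<not> (E s u \<and> \<not> E s w)"
  proof
    assume h: "E s u \<and> \<not> E s w"
    have "has_induced V E {0..<5::nat} P5_adj"
      by (rule P5_lemma[of V E w c u s a]) (use assms h sym in metis)+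
    with assms(2) show False by simp
  qed
  moreover have "\<not> (E s w \<and> \<not> E s u)"
  proof
    assume h: "E s w \<and> \<not> E s u"
    have "has_induced V E {0..<5::nat} P5_adj"
      by (rule P5_lemma[of V E u c w s a]) (use assms h sym in metis)+
    with assms(2) show False by simp
  qed
  ultimately show ?thesis by blast
qed

lemma inj5: "inj_on v {0..<5::nat} \<Longrightarrow> k < 5 \<Longrightarrow> l < 5 \<Longrightarrow> v k = v l \<longleftrightarrow> k = l"
  by (auto simp: inj_on_def)

lemma NC_iff: "k < 5 \<Longrightarrow> E x (v k) \<longleftrightarrow> v k \<in> NC E v x"
  by (auto simp: NC_def)

theorem mainTheorem10:
  fixes V :: "'a set" and E :: "'a \<Rightarrow> 'a \<Rightarrow> bool" and v :: "nat \<Rightarrow> 'a"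
    and i :: int and u w s :: 'a
  assumes "simple_graph V E"
    and "P5_chair_free V E"
    and "induced_C5 V E v"
    and "1 \<le> i" and "i \<le> 5"
    and "u \<in> S4 V E v i" and "w \<in> S4 V E v i" and "\<not> E u w"
    and "s \<in> S13 V E v i \<union> S4 V E v (i + 2) \<union> S4 V E v (i - 2)"
  shows "(E s u \<and> E s w) \<or> (\<not> E s u \<and> \<not> E s w)"
proof -
  have inj: "inj_on v {0..<5}" and VV: "v ` {0..<5} \<subseteq> V"
    and cyc: "\<forall>i<5. \<forall>j<5. E (v i) (v j) \<longleftrightarrow> (j = (i + 1) mod 5 \<or> i = (j + 1) mod 5)"
    using assms(3) unfolding induced_C5_def by auto
  have nP5: "\<not> has_induced V E {0..<5::nat} P5_adj" using assms(2) unfolding P5_chair_free_def by simp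
  have vV: "\<And>k. k < 5 \<Longrightarrow> v k \<in> V" using VV by auto
  have uV: "u \<in> V" "w \<in> V" "s \<in> V" using assms(6,7,9) unfolding S4_def S13_def by auto
  have Nu: "NC E v u = {cv v (i - 2), cv v (i - 1), cv v (i + 1), cv v (i + 2)}"
   and Nw: "NC E v w = {cv v (i - 2), cv v (i - 1), cv v (i + 1), cv v (i + 2)}"
    using assms(6,7) unfolding S4_def by auto
  have Ns: "NC E v s = {cv v (i - 1), cv v i, cv v (i + 1)} \<or>
            NC E v s = {cv v (i + 2 - 2), cv v (i + 2 - 1), cv v (i + 2 + 1), cv v (i + 2 + 2)} \<or>
            NC E v s = {cv v (i - 2 - 2), cv v (i - 2 - 1), cv v (i - 2 + 1), cv v (i - 2 + 2)}"
    using assms(9) unfolding S4_def S13_def by auto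
  have ex: "\<exists>a c. a < 5 \<and> c < 5 \<and> E u (v c) \<and> E w (v c) \<and> \<not> E u (v a) \<and> \<not> E w (v a)
      \<and> \<not> E (v c) (v a) \<and> E s (v a) \<and> \<not> E s (v c)"
  proof -
    have I: "i \<in> {1,2,3,4,5}" using assms(4,5) by auto
    have E1: "\<And>x k. k < 5 \<Longrightarrow> E x (v k) \<longleftrightarrow> v k \<in> NC E v x" by (rule NC_iff)
    have dd: "\<And>k l. k < 5 \<Longrightarrow> l < 5 \<Longrightarrow> v k = v l \<longleftrightarrow> k = l" by (rule inj5[OF inj])
    from Ns show ?thesis
    proof (elim disjE)
      assume h: "NC E v s = {cv v (i - 1), cv v i, cv v (i + 1)}"
      show ?thesis
        apply (rule exI[of _ "nat (i mod 5)"], rule exI[of _ "nat ((i+2) mod 5)"])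
        using I h Nu Nw cyc by (auto simp: E1 dd cv_def)
    next
      assume h: "NC E v s = {cv v (i + 2 - 2), cv v (i + 2 - 1), cv v (i + 2 + 1), cv v (i + 2 + 2)}"
      show ?thesis
        apply (rule exI[of _ "nat (i mod 5)"], rule exI[of _ "nat ((i+2) mod 5)"])
        using I h Nu Nw cyc by (auto simp: E1 dd cv_def)
    next
      assume h: "NC E v s = {cv v (i - 2 - 2), cv v (i - 2 - 1), cv v (i - 2 + 1), cv v (i - 2 + 2)}"
      show ?thesis
        apply (rule exI[of _ "nat (i mod 5)"], rule exI[of _ "nat ((i-2) mod 5)"])
        using I h Nu Nw cyc by (auto simp: E1 dd cv_def)
    qed
  qed
  then obtain a c where ac: "a < 5" "c < 5" "E u (v c)" "E w (v c)" "\<not> E u (v a)" "\<not> E w (v a)"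
      "\<not> E (v c) (v a)" "E s (v a)" "\<not> E s (v c)" by blast
  show ?thesis
    by (rule core[OF assms(1) nP5 vV[OF ac(1)] vV[OF ac(2)] uV ac(3-9) assms(8)])
qed

end
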